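(* Let $\mathbf{M}$ be a $D\times D$ unimodular matrix and $\bm{\Gamma}_1,\dots,\bm{\Gamma}_L$ nonsingular $D\times D$ integer matrices that are pairwise commutative and coprime; let $\mathbf{M}_i=\mathbf{M}\bm{\Gamma}_i$. Then $\mathbf{R}=\mathbf{M}\bm{\Gamma}_1\cdots\bm{\Gamma}_L\mathbf{U}$ is an lcrm of the $\mathbf{M}_i$ for every unimodular $\mathbf{U}$; with $\mathbf{W}_i=\mathbf{M}\bm{\Gamma}_1\cdots\bm{\Gamma}_{i-1}\bm{\Gamma}_{i+1}\cdots\bm{\Gamma}_L$, there exist integer matrices $\widehat{\mathbf{W}}_i,\mathbf{Q}_i$ with $\mathbf{W}_i\widehat{\mathbf{W}}_i+\mathbf{M}_i\mathbf{Q}_i=\mathbf{I}$ for each $i$, and for any such choice every $\mathbf{m}\in\mathcal{N}(\mathbf{R})$ satisfies $$\mathbf{m}=\Big\langle\sum_{i=1}^L\mathbf{W}_i\widehat{\mathbf{W}}_i\mathbf{r}_i\Big\rangle_{\mathbf{R}},\qquad \mathbf{r}_i=\langle\mathbf{m}\rangle_{\mathbf{M}_i}.$$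
   Context: All matrices are $D\times D$ integer matrices; unimodular means integer with determinant $\pm1$. Commuting nonsingular integer matrices are coprime if all their common left (equivalently right) divisors are unimodular, where $\mathbf{A}$ is a left divisor of $\mathbf{M}$ if $\mathbf{A}^{-1}\mathbf{M}$ is integer. An lcrm of $\mathbf{M}_1,\dots,\mathbf{M}_L$ is a nonsingular integer $\mathbf{R}=\mathbf{M}_i\mathbf{P}_i$ (integer $\mathbf{P}_i$, all $i$) such that every such common right multiple equals $\mathbf{R}\mathbf{A}$ for integer $\mathbf{A}$. $\mathcal{N}(\mathbf{M})=\{\mathbf{k}\in\mathbb{Z}^D:\mathbf{k}=\mathbf{M}\mathbf{x},\ \mathbf{x}\in[0,1)^D\}$; $\langle\mathbf{m}\rangle_{\mathbf{M}}$ is the unique $\mathbf{r}\in\mathcal{N}(\mathbf{M})$ with $\mathbf{m}-\mathbf{r}\in\mathbf{M}\mathbb{Z}^D$. *)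

theory Defs
  imports "HOL-Analysis.Analysis"
begin

type_synonym 'n imat = "int ^'n ^'n"

definition unimodular :: "'n::finite imat \<Rightarrow> bool" where
  "unimodular A \<longleftrightarrow> det A = 1 \<or> det A = -1"

definition nonsingular :: "'n::finite imat \<Rightarrow> bool" where
  "nonsingular A \<longleftrightarrow> det A \<noteq> 0"

definition left_divisor :: "'n::finite imat \<Rightarrow> 'n imat \<Rightarrow> bool" where
  "left_divisor A M \<longleftrightarrow> nonsingular A \<and> (\<exists>P. M = A ** P)"

definition coprime_mat :: "'n::finite imat \<Rightarrow> 'n imat \<Rightarrow> bool" where
  "coprime_mat A B \<longleftrightarrow> (\<forall>C. left_divisor C A \<and> left_divisor C B \<longrightarrow> unimodular C)"

definition is_lcrm :: "'n::finite imat \<Rightarrow> (nat \<Rightarrow> 'n imat) \<Rightarrow> nat set \<Rightarrow> bool" where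
  "is_lcrm R Ms I \<longleftrightarrow> nonsingular R \<and> (\<forall>i\<in>I. \<exists>P. R = Ms i ** P) \<and>
     (\<forall>S. nonsingular S \<and> (\<forall>i\<in>I. \<exists>P. S = Ms i ** P) \<longrightarrow> (\<exists>A. S = R ** A))"

definition real_mat :: "'n::finite imat \<Rightarrow> real ^'n ^'n" where
  "real_mat A = (\<chi> i j. real_of_int (A $ i $ j))"

definition real_vec :: "int ^'n::finite \<Rightarrow> real ^'n" where
  "real_vec k = (\<chi> i. real_of_int (k $ i))"

definition NN :: "'n::finite imat \<Rightarrow> (int ^'n) set" where
  "NN M = {k. \<exists>x::real^'n. (\<forall>i. 0 \<le> x $ i \<and> x $ i < 1) \<and> real_vec k = real_mat M *v x}"

definition resid :: "int ^'n::finite \<Rightarrow> 'n imat \<Rightarrow> int ^'n" where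
  "resid m M = (THE r. r \<in> NN M \<and> (\<exists>z. m - r = M *v z))"

definition mprod :: "(nat \<Rightarrow> 'n::finite imat) \<Rightarrow> nat list \<Rightarrow> 'n imat" where
  "mprod G is = foldr (\<lambda>i A. G i ** A) is (mat 1)"

end

theory Submission
  imports Defs
begin



lemma real_mat_mult: "real_mat (A ** B) = real_mat A ** real_mat (B::'n::finite imat)"
  by (simp add: real_mat_def matrix_matrix_mult_def vec_eq_iff)

lemma real_vec_mult: "real_vec (A *v x) = real_mat A *v real_vec (x::int^'n::finite)"
  by (simp add: real_mat_def real_vec_def matrix_vector_mult_def vec_eq_iff)

lemma real_vec_inj: "real_vec x = real_vec y \<longleftrightarrow> x = y"
  by (simp add: real_vec_def vec_eq_iff)

lemma real_mat_inj: "real_mat A = real_mat B \<longleftrightarrow> A = B"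
  by (simp add: real_mat_def vec_eq_iff)

lemma real_vec_smult: "real_vec (c *s x) = real_of_int c *s real_vec x"
  by (simp add: real_vec_def vec_eq_iff)

lemma real_vec_diff: "real_vec (x - y) = real_vec x - real_vec y"
  by (simp add: real_vec_def vec_eq_iff)

lemma real_mat_one: "real_mat (mat 1 :: 'n::finite imat) = mat 1"
  by (simp add: real_mat_def mat_def vec_eq_iff)

lemma det_real_mat: "det (real_mat (A::'n::finite imat)) = real_of_int (det A)"
  by (simp add: det_def real_mat_def)

lemma int_cramer:
  fixes A :: "'n::finite imat"
  assumes "det A \<noteq> 0"
  shows "A *v (\<chi> k. det (\<chi> i j. if j = k then b$i else A$i$j)) = det A *s b"
proof -
  let ?z = "(\<chi> k. det (\<chi> i j. if j = k then b$i else A$i$j))"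
  have d: "det (real_mat A) \<noteq> 0" using assms by (simp add: det_real_mat)
  define x where "x = (\<chi> k. det (\<chi> i j. if j = k then real_vec b $ i else real_mat A $ i $ j) / det (real_mat A))"
  have hx: "real_mat A *v x = real_vec b" using cramer[OF d] x_def by blast
  have "real_vec ?z = det (real_mat A) *s x"
  proof -
    have "\<And>k. det (\<chi> i j. if j = k then real_vec b $ i else real_mat A $ i $ j)
         = real_of_int (det (\<chi> i j. if j = k then b$i else A$i$j))"
    proof -
      fix k
      have "(\<chi> i j. if j = k then real_vec b $ i else real_mat A $ i $ j)
         = real_mat (\<chi> i j. if j = k then b$i else A$i$j)"
        by (simp add: real_mat_def real_vec_def vec_eq_iff)
      then show "det (\<chi> i j. if j = k then real_vec b $ i else real_mat A $ i $ j)
         = real_of_int (det (\<chi> i j. if j = k then b$i else A$i$j))"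
        by (simp add: det_real_mat)
    qed
    then show ?thesis using d by (simp add: x_def real_vec_def vec_eq_iff)
  qed
  then have "real_vec (A *v ?z) = real_vec (det A *s b)"
    by (simp add: real_vec_mult real_vec_smult hx det_real_mat vector_smult_assoc
          vector_scalar_commute)
  then show ?thesis by (simp add: real_vec_inj)
qed


lemma mv_smult: "(A::'n::finite imat) *v (c *s x) = c *s (A *v x)"
  by (simp add: vector_scalar_mult_def matrix_vector_mult_def mult_ac sum_distrib_left vec_eq_iff)

definition colmat :: "('n::finite \<Rightarrow> int^'n) \<Rightarrow> 'n imat" where
  "colmat f = (\<chi> i k. f k $ i)"

lemma colmat_mult: "(A ** colmat f) $ i $ k = (A *v f k) $ i"
  by (simp add: colmat_def matrix_matrix_mult_def matrix_vector_mult_def)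

definition evec :: "'n::finite \<Rightarrow> int^'n" where
  "evec k = (\<chi> i. if i = k then 1 else 0)"

lemma colmat_evec: "colmat evec = mat 1"
  by (simp add: colmat_def evec_def mat_def vec_eq_iff)

lemma mat_evec: "(A::'n::finite imat) *v evec k = (\<chi> i. A $ i $ k)"
  by (simp add: evec_def matrix_vector_mult_def vec_eq_iff if_distrib cong: if_cong)

lemma cols_to_mat:
  fixes S A :: "'n::finite imat"
  assumes "\<And>k. \<exists>z. (\<chi> i. S $ i $ k) = A *v z"
  shows "\<exists>P. S = A ** P"
proof -
  from assms obtain z where z: "\<And>k. (\<chi> i. S $ i $ k) = A *v z k" by metis
  have "S $ i $ k = (A ** colmat z) $ i $ k" for i k
    using arg_cong[OF z[of k], of "\<lambda>v. v $ i"] by (simp add: colmat_mult)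
  then show ?thesis by (auto simp: vec_eq_iff)
qed

lemma mat_cols_in:
  fixes S A P :: "'n::finite imat"
  assumes "S = A ** P"
  shows "\<exists>z. (\<chi> i. S $ i $ k) = A *v z"
  by (rule exI[of _ "\<chi> i. P $ i $ k"])
     (simp add: assms matrix_matrix_mult_def matrix_vector_mult_def vec_eq_iff)

lemma unimod_inv:
  fixes A :: "'n::finite imat"
  assumes "unimodular A"
  shows "\<exists>B. A ** B = mat 1 \<and> B ** A = mat 1"
proof -
  have d: "det A \<noteq> 0" "det A * det A = 1" using assms unfolding unimodular_def by auto
  have "\<exists>z. (\<chi> i. (mat 1 :: 'n imat) $ i $ k) = A *v z" for k
  proof -
    let ?z = "(\<chi> k'. det (\<chi> i j. if j = k' then evec k$i else A$i$j))"
    have "A *v (det A *s ?z) = det A *s (A *v ?z)" by (rule mv_smult)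
    also have "\<dots> = det A *s (det A *s evec k)"
      using int_cramer[OF d(1), of "evec k"] by simp
    also have "\<dots> = evec k" using d(2) by (simp add: vector_smult_assoc)
    finally have "evec k = A *v (det A *s ?z)" ..
    moreover have "(\<chi> i. (mat 1 :: 'n imat) $ i $ k) = evec k" by (simp add: evec_def mat_def vec_eq_iff)
    ultimately have "(\<chi> i. (mat 1 :: 'n imat) $ i $ k) = A *v (det A *s ?z)" by (metis (no_types))
    then show ?thesis by blast
  qed
  then obtain B where B: "mat 1 = A ** B" using cols_to_mat by blast
  then have "real_mat A ** real_mat B = mat 1" by (metis real_mat_mult real_mat_one)
  then have "real_mat B ** real_mat A = mat 1" using matrix_left_right_inverse by blast
  then have "B ** A = mat 1" by (metis real_mat_mult real_mat_one real_mat_inj)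
  with B show ?thesis by auto
qed

definition inlat :: "'n::finite imat \<Rightarrow> int^'n \<Rightarrow> bool" where
  "inlat A v \<longleftrightarrow> (\<exists>z. v = A *v z)"

lemma inlat_0: "inlat A 0"
  unfolding inlat_def by (rule exI[of _ 0]) simp

lemma inlat_add: "inlat A u \<Longrightarrow> inlat A v \<Longrightarrow> inlat A (u + v)"
  unfolding inlat_def by (metis matrix_vector_right_distrib)

lemma inlat_diff: "inlat A u \<Longrightarrow> inlat A v \<Longrightarrow> inlat A (u - v)"
  unfolding inlat_def by (metis matrix_vector_mult_diff_distrib)

lemma inlat_smult: "inlat A u \<Longrightarrow> inlat A (c *s u)"
  unfolding inlat_def by (metis mv_smult)

lemma inlat_mult: "inlat A (A ** B *v w)"
  unfolding inlat_def by (metis matrix_vector_mul_assoc)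

lemma inlat_mult': "inlat A (A *v w)"
  unfolding inlat_def by blast

lemma inlat_sum: "finite I \<Longrightarrow> (\<And>i. i \<in> I \<Longrightarrow> inlat A (f i)) \<Longrightarrow> inlat A (sum f I)"
  by (induction I rule: finite_induct) (auto intro: inlat_0 inlat_add)

lemma inlat_det: "det A \<noteq> 0 \<Longrightarrow> inlat A (det A *s b)"
  unfolding inlat_def using int_cramer by (metis (no_types))




lemma colmat_evec_mult: "colmat f *v evec j = f j"
  by (simp add: mat_evec colmat_def)

lemma smult_add_distrib: "(c::int) *s (u + v) = c *s u + c *s v"
  by (simp add: vec_eq_iff algebra_simps)

lemma smult_diff_distrib: "(c::int) *s (u - v) = c *s u - c *s v"
  by (simp add: vec_eq_iff algebra_simps)

lemma bezout_from_coprime: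
  fixes A B :: "'n::finite imat"
  assumes cop: "coprime_mat A B" and nsB: "nonsingular B"
  shows "\<exists>X Y. A ** X + B ** Y = mat 1"
proof -
  define Lt where "Lt = {v. \<exists>x y. v = A *v x + B *v y}"
  have L0: "0 \<in> Lt" unfolding Lt_def by (rule CollectI, rule exI[of _ 0], rule exI[of _ 0]) simp
  have Ladd: "u + v \<in> Lt" if hh: "u \<in> Lt" "v \<in> Lt" for u v
  proof -
    obtain x y x' y' where "u = A *v x + B *v y" "v = A *v x' + B *v y'" using hh unfolding Lt_def by blast
    then have "u + v = A *v (x + x') + B *v (y + y')" by (simp add: matrix_vector_right_distrib algebra_simps)
    then show ?thesis unfolding Lt_def by blast
  qed
  have Ldiff: "u - v \<in> Lt" if hh: "u \<in> Lt" "v \<in> Lt" for u v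
  proof -
    obtain x y x' y' where "u = A *v x + B *v y" "v = A *v x' + B *v y'" using hh unfolding Lt_def by blast
    then have "u - v = A *v (x - x') + B *v (y - y')" by (simp add: matrix_vector_mult_diff_distrib algebra_simps)
    then show ?thesis unfolding Lt_def by blast
  qed
  have Lsm: "c *s u \<in> Lt" if hh: "u \<in> Lt" for u c
  proof -
    obtain x y where "u = A *v x + B *v y" using hh unfolding Lt_def by blast
    then have "c *s u = A *v (c *s x) + B *v (c *s y)" by (simp add: mv_smult smult_add_distrib)
    then show ?thesis unfolding Lt_def by blast
  qed
  have LA: "A *v x \<in> Lt" for x unfolding Lt_def by (rule CollectI, rule exI[of _ x], rule exI[of _ 0]) simp
  have LB: "B *v x \<in> Lt" for x unfolding Lt_def by (rule CollectI, rule exI[of _ 0], rule exI[of _ x]) simp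
  define d where "d = det B"
  have d0: "d \<noteq> 0" using nsB unfolding nonsingular_def d_def .
  have Ld: "d *s b \<in> Lt" for b
    using inlat_det[OF d0[unfolded d_def], of b] LB unfolding inlat_def d_def by auto
  obtain idx :: "'n \<Rightarrow> nat" and n where idx0: "idx ` UNIV = {i. i < n}" "inj idx"
    using finite_imp_inj_to_nat_seg[of "UNIV :: 'n set"] by auto
  have idx: "inj idx" "\<And>j. idx j < n" using idx0 by auto
  define Lj where "Lj j = {v \<in> Lt. \<forall>j'. idx j' > idx j \<longrightarrow> v $ j' = 0}" for j
  define T where "T j = (\<lambda>v. v $ j) ` Lj j" for j
  have Ljdiff: "u - c *s v \<in> Lj j" if "u \<in> Lj j" "v \<in> Lj j" for u v c j
    using that Ldiff Lsm unfolding Lj_def by auto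
  have Tpos: "\<exists>k::nat. k > 0 \<and> int k \<in> T j" for j
  proof -
    have "(sgn d * d) *s evec j \<in> Lj j"
      using Lsm[OF Ld[of "evec j"], of "sgn d"] idx(1) unfolding Lj_def
      by (auto simp: vector_smult_assoc evec_def)
    then have "sgn d * d \<in> T j" unfolding T_def by (force simp: evec_def)
    moreover have "sgn d * d = int (nat \<bar>d\<bar>)" "nat \<bar>d\<bar> > 0" using d0 by (auto simp: abs_if sgn_if)
    ultimately show ?thesis by metis
  qed
  define g where "g j = int (LEAST k::nat. k > 0 \<and> int k \<in> T j)" for j
  have gT: "g j > 0 \<and> g j \<in> T j" for j
    using LeastI_ex[OF Tpos[of j]] unfolding g_def by auto
  have gmin: "g j \<le> t" if "0 < t" "t \<in> T j" for t j
  proof -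
    have "(LEAST k::nat. k > 0 \<and> int k \<in> T j) \<le> nat t"
      by (rule Least_le) (use that in auto)
    then show ?thesis unfolding g_def using that by linarith
  qed
  have gdvd: "g j dvd t" if "t \<in> T j" for t j
  proof -
    obtain u where u: "u \<in> Lj j" "u $ j = t" using \<open>t \<in> T j\<close> unfolding T_def by auto
    obtain c where c: "c \<in> Lj j" "c $ j = g j" using gT[of j] unfolding T_def by auto
    have "u - (t div g j) *s c \<in> Lj j" by (rule Ljdiff[OF u(1) c(1)])
    moreover have "(u - (t div g j) *s c) $ j = t mod g j"
      using u(2) c(2) by (simp add: minus_div_mult_eq_mod[symmetric] mult.commute)
    ultimately have tm: "t mod g j \<in> T j" unfolding T_def by (metis image_eqI)
    have "t mod g j = 0"
    proof (rule ccontr)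
      assume "t mod g j \<noteq> 0"
      then have "t mod g j > 0" using gT[of j] by (metis pos_mod_sign order_le_less conjunct1)
      then have "g j \<le> t mod g j" using gmin tm by blast
      moreover have "t mod g j < g j" using gT[of j] by simp
      ultimately show False by simp
    qed
    then show ?thesis by (simp add: dvd_eq_mod_eq_0)
  qed
  have "\<forall>j. \<exists>v. v \<in> Lj j \<and> v $ j = g j" using gT unfolding T_def by (metis (no_types, lifting) imageE)
  then obtain c where c: "\<And>j. c j \<in> Lj j" "\<And>j. c j $ j = g j" by metis
  have "\<forall>j. \<exists>x y. c j = A *v x + B *v y" using c(1) unfolding Lj_def Lt_def by blast
  then obtain xc yc where xcyc: "\<And>j. c j = A *v xc j + B *v yc j" by metis
  define C where "C = A ** colmat xc + B ** colmat yc"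
  have Cz: "C *v z = A *v (colmat xc *v z) + B *v (colmat yc *v z)" for z
    unfolding C_def by (simp add: matrix_vector_mult_add_rdistrib matrix_vector_mul_assoc)
  have CL: "C *v z \<in> Lt" for z unfolding Cz Lt_def by blast
  have Ccol: "C *v evec j = c j" for j unfolding Cz colmat_evec_mult xcyc ..
  have main: "\<forall>v. v \<in> Lt \<longrightarrow> (\<forall>j. idx j \<ge> k \<longrightarrow> v $ j = 0) \<longrightarrow> inlat C v" for k
  proof (induction k)
    case 0
    show ?case
    proof (intro allI impI)
      fix v :: "int^'n" assume "\<forall>j. 0 \<le> idx j \<longrightarrow> v $ j = 0"
      then have "v = 0" by (simp add: vec_eq_iff)
      then show "inlat C v" using inlat_0 by simp
    qed
  next
    case (Suc k)
    show ?case
    proof (intro allI impI)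
      fix v assume v: "v \<in> Lt" "\<forall>j. Suc k \<le> idx j \<longrightarrow> v $ j = 0"
      show "inlat C v"
      proof (cases "\<exists>j. idx j = k")
        case False
        then have "\<forall>j. k \<le> idx j \<longrightarrow> v $ j = 0" using v(2) by (metis le_antisym not_less_eq_eq)
        then show ?thesis using Suc v(1) by blast
      next
        case True
        then obtain j where j: "idx j = k" by blast
        have vL: "v \<in> Lj j" unfolding Lj_def using v j by auto
        then have "v $ j \<in> T j" unfolding T_def by auto
        then obtain t where t: "v $ j = g j * t" using gdvd by (metis dvdE)
        define w where "w = v - t *s c j"
        have wL: "w \<in> Lt" unfolding w_def using Ldiff Lsm v(1) c(1)[of j] unfolding Lj_def by auto
        have "\<forall>j'. k \<le> idx j' \<longrightarrow> w $ j' = 0"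
        proof (intro allI impI)
          fix j' assume "k \<le> idx j'"
          show "w $ j' = 0"
          proof (cases "j' = j")
            case True then show ?thesis using t c(2)[of j] by (simp add: w_def)
          next
            case False
            then have "idx j' \<noteq> k" using j idx(1) by (metis injD)
            then have "Suc k \<le> idx j'" "idx j' > idx j" using \<open>k \<le> idx j'\<close> j by auto
            then show ?thesis using v(2) c(1)[of j] unfolding Lj_def w_def by auto
          qed
        qed
        then have "inlat C w" using Suc wL by blast
        moreover have "inlat C (t *s c j)" using inlat_smult[OF inlat_mult'[of C "evec j"]] Ccol by simp
        ultimately have "inlat C (w + t *s c j)" by (rule inlat_add)
        then show ?thesis by (simp add: w_def)
      qed
    qed
  qed
  have allL: "inlat C v" if "v \<in> Lt" for v
    using main[of n] that idx(2) by (meson not_le)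
  have nsC: "det C \<noteq> 0"
  proof -
    define Dm :: "'n imat" where "Dm = (\<chi> i k. if i = k then d else 0)"
    have "\<exists>z. (\<chi> i. Dm $ i $ k) = C *v z" for k
    proof -
      have "(\<chi> i. Dm $ i $ k) = d *s evec k"
        by (simp add: vec_eq_iff evec_def Dm_def)
      then show ?thesis using allL[OF Ld[of "evec k"]] unfolding inlat_def by metis
    qed
    then obtain W where W: "Dm = C ** W" using cols_to_mat by blast
    have "det Dm = d ^ CARD('n)"
      unfolding Dm_def by (subst det_diagonal) auto
    then have "det C * det W \<noteq> 0" using W d0 by (simp add: det_mul)
    then show ?thesis by simp
  qed
  have divA: "left_divisor C A"
    unfolding left_divisor_def nonsingular_def
    using nsC cols_to_mat[of A C] allL[OF LA] mat_evec[of A] unfolding inlat_def by metis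
  have divB: "left_divisor C B"
    unfolding left_divisor_def nonsingular_def
    using nsC cols_to_mat[of B C] allL[OF LB] mat_evec[of B] unfolding inlat_def by metis
  have "unimodular C" using cop divA divB unfolding coprime_mat_def by blast
  then obtain C' where C': "C ** C' = mat 1" using unimod_inv by blast
  have "evec k \<in> Lt" for k
  proof -
    have "C *v (C' *v evec k) = evec k" by (simp add: matrix_vector_mul_assoc C')
    then show ?thesis using CL by metis
  qed
  then have "\<forall>k. \<exists>x y. evec k = A *v x + B *v y" unfolding Lt_def by blast
  then obtain x y where xy: "\<And>k. evec k = A *v x k + B *v y k" by metis
  have "A ** colmat x + B ** colmat y = mat 1"
  proof -
    have "(A ** colmat x + B ** colmat y) $ i $ k = mat 1 $ i $ k" for i k
      using arg_cong[OF xy[of k], of "\<lambda>v. v $ i"]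
      by (simp add: colmat_mult evec_def mat_def)
    then show ?thesis by (simp add: vec_eq_iff)
  qed
  then show ?thesis by blast
qed




lemma mv_neg: "(A::'n::finite imat) *v (- v) = - (A *v v)"
  by (simp add: matrix_vector_mult_def vec_eq_iff sum_negf)

lemma inlat_neg: "inlat A (u - w) \<Longrightarrow> inlat A (w - u)"
  using inlat_diff[OF inlat_0, of A "u - w"] by simp

lemma inter_lemma:
  fixes P G :: "'n::finite imat"
  assumes comm: "P ** G = G ** P" and bez: "P ** a + G ** b = mat 1" and ns: "det G \<noteq> 0"
    and eq: "P *v x = G *v y"
  shows "inlat G x"
proof -
  define cls where "cls u = {w. inlat G (w - u)}" for u
  have cls_eq: "cls u = cls w" if "inlat G (u - w)" for u w
  proof -
    have "inlat G (v - u) \<longleftrightarrow> inlat G (v - w)" for v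
    proof
      assume "inlat G (v - u)"
      from inlat_add[OF this that] show "inlat G (v - w)" by simp
    next
      assume "inlat G (v - w)"
      from inlat_add[OF this inlat_neg[OF that]] show "inlat G (v - u)" by simp
    qed
    then show ?thesis unfolding cls_def by blast
  qed
  have cls_eqD: "inlat G (u - w)" if "cls u = cls w" for u w
  proof -
    have "u \<in> cls u" unfolding cls_def using inlat_0 by simp
    then show ?thesis using that unfolding cls_def by simp
  qed
  define d where "d = det G"
  have ad: "\<bar>d\<bar> > 0" using ns d_def by simp
  define S where "S = {u::int^'n. \<forall>i. u $ i \<in> {0..<\<bar>d\<bar>}}"
  have "S \<subseteq> vec_lambda ` (PiE UNIV (\<lambda>_. {0..<\<bar>d\<bar>}))"
  proof
    fix u assume "u \<in> S"
    then have "(\<lambda>i. u $ i) \<in> PiE UNIV (\<lambda>_. {0..<\<bar>d\<bar>})" unfolding S_def by (auto simp: PiE_iff)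
    moreover have "u = vec_lambda (\<lambda>i. u $ i)" by simp
    ultimately show "u \<in> vec_lambda ` (PiE UNIV (\<lambda>_. {0..<\<bar>d\<bar>}))" by blast
  qed
  then have finS: "finite S" by (rule finite_subset) (intro finite_imageI finite_PiE; simp)
  have rS: "range cls = cls ` S"
  proof -
    have "cls u \<in> cls ` S" for u
    proof -
      define u' where "u' = (\<chi> i. u $ i mod \<bar>d\<bar>)"
      have "u' \<in> S" unfolding S_def u'_def using ad by auto
      have "u - u' = d *s (sgn d *s (\<chi> i. u $ i div \<bar>d\<bar>))"
        unfolding u'_def by (simp add: vec_eq_iff abs_mult_sgn minus_mod_eq_mult_div vector_smult_assoc
            mult.commute[of "sgn d"] abs_sgn[symmetric])
      then have "inlat G (u - u')" using inlat_det ns d_def by metis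
      then have "cls u = cls u'" by (rule cls_eq)
      then show ?thesis using \<open>u' \<in> S\<close> by blast
    qed
    then show ?thesis by blast
  qed
  have finQ: "finite (range cls)" unfolding rS using finS by simp
  define phi where "phi c = cls (P *v (SOME u. u \<in> c))" for c
  have phicls: "phi (cls u) = cls (P *v u)" for u
  proof -
    define u' where "u' = (SOME w. w \<in> cls u)"
    have "u \<in> cls u" unfolding cls_def using inlat_0 by simp
    then have "u' \<in> cls u" unfolding u'_def by (rule someI)
    then obtain z where z: "u' - u = G *v z" unfolding cls_def inlat_def by blast
    have "P *v u' - P *v u = P *v (u' - u)" by (simp add: matrix_vector_mult_diff_distrib)
    also have "\<dots> = G *v (P *v z)" by (simp add: z matrix_vector_mul_assoc comm)
    finally have "inlat G (P *v u' - P *v u)" unfolding inlat_def by blast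
    then show ?thesis unfolding phi_def u'_def[symmetric] by (rule cls_eq)
  qed
  have "phi ` range cls = range cls"
  proof
    show "phi ` range cls \<subseteq> range cls" using phicls by auto
    show "range cls \<subseteq> phi ` range cls"
    proof
      fix c assume "c \<in> range cls"
      then obtain t where t: "c = cls t" by blast
      have "P *v (a *v t) - t = (P ** a) *v t - (P ** a + G ** b) *v t"
        by (simp add: bez matrix_vector_mul_assoc)
      also have "\<dots> = G *v (- (b *v t))"
        by (simp add: matrix_vector_mult_add_rdistrib matrix_vector_mul_assoc[symmetric]
            mv_neg)
      finally have "inlat G (P *v (a *v t) - t)" unfolding inlat_def by blast
      then have "c = phi (cls (a *v t))" using t phicls cls_eq by metis
      then show "c \<in> phi ` range cls" by blast
    qed
  qed
  then have inj: "inj_on phi (range cls)" using finQ eq_card_imp_inj_on by metis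
  have "phi (cls x) = phi (cls 0)"
  proof -
    have "inlat G (P *v x - P *v 0)" using eq by (simp add: inlat_mult')
    then show ?thesis unfolding phicls by (rule cls_eq)
  qed
  then have "cls x = cls 0" using inj by (auto dest: inj_onD)
  then have "inlat G (x - 0)" by (rule cls_eqD)
  then show ?thesis by simp
qed

lemma inter2:
  fixes P G :: "'n::finite imat"
  assumes comm: "P ** G = G ** P" and bez: "P ** a + G ** b = mat 1" and ns: "det G \<noteq> 0"
    and "inlat P v" "inlat G v"
  shows "inlat (P ** G) v"
proof -
  obtain x y where "v = P *v x" "v = G *v y" using assms(4,5) unfolding inlat_def by blast
  then have "inlat G x" using inter_lemma[OF comm bez ns] by metis
  then obtain z where "x = G *v z" unfolding inlat_def by blast
  then show ?thesis using \<open>v = P *v x\<close> unfolding inlat_def by (metis matrix_vector_mul_assoc)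
qed




lemma mm_add_rdistrib: "((A::'n::finite imat) + B) ** C = A ** C + B ** C"
  by (simp add: matrix_matrix_mult_def vec_eq_iff sum.distrib distrib_right)

lemma mprod_Nil[simp]: "mprod G [] = mat 1" by (simp add: mprod_def)
lemma mprod_Cons[simp]: "mprod G (x # xs) = G x ** mprod G xs" by (simp add: mprod_def)

lemma mprod_det: "(\<forall>i\<in>set xs. det (G i) \<noteq> 0) \<Longrightarrow> det (mprod G xs) \<noteq> 0"
  by (induction xs) (auto simp: det_mul)

lemma comm_mprod:
  "(\<forall>j\<in>set xs. G i ** G j = G j ** G i) \<Longrightarrow> G i ** mprod G xs = mprod G xs ** G i"
proof (induction xs)
  case Nil then show ?case by simp
next
  case (Cons x xs)
  have "G i ** (G x ** mprod G xs) = (G i ** G x) ** mprod G xs" by (simp add: matrix_mul_assoc)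
  also have "\<dots> = G x ** (G i ** mprod G xs)" using Cons.prems by (simp add: matrix_mul_assoc)
  also have "\<dots> = G x ** (mprod G xs ** G i)" using Cons by simp
  finally show ?case by (simp add: matrix_mul_assoc)
qed

lemma mprod_pull:
  assumes "distinct xs" "i \<in> set xs" "set xs \<subseteq> I"
    and comm: "\<forall>i\<in>I. \<forall>j\<in>I. i \<noteq> j \<longrightarrow> G i ** G j = G j ** G i"
  shows "mprod G xs = G i ** mprod G (filter (\<lambda>j. j \<noteq> i) xs)"
  using assms(1-3)
proof (induction xs)
  case Nil then show ?case by simp
next
  case (Cons x xs)
  show ?case
  proof (cases "x = i")
    case True
    then have "filter (\<lambda>j. j \<noteq> i) xs = xs" using Cons.prems by (auto intro: filter_True)
    then show ?thesis using True by simp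
  next
    case False
    then have "i \<in> set xs" using Cons.prems by simp
    then have IH: "mprod G xs = G i ** mprod G (filter (\<lambda>j. j \<noteq> i) xs)" using Cons by auto
    have c: "G x ** G i = G i ** G x" using comm Cons.prems False \<open>i \<in> set xs\<close> by auto
    have "mprod G (x # xs) = (G x ** G i) ** mprod G (filter (\<lambda>j. j \<noteq> i) xs)"
      by (simp add: IH matrix_mul_assoc)
    also have "\<dots> = G i ** (G x ** mprod G (filter (\<lambda>j. j \<noteq> i) xs))"
      by (simp add: c matrix_mul_assoc)
    finally show ?thesis using False by simp
  qed
qed

lemma bezout_prod:
  assumes "x \<notin> set xs" "set (x # xs) \<subseteq> I"
    and comm: "\<forall>i\<in>I. \<forall>j\<in>I. i \<noteq> j \<longrightarrow> G i ** G j = G j ** G i"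
    and bz: "\<forall>i\<in>I. \<forall>j\<in>I. i \<noteq> j \<longrightarrow> (\<exists>X Y. G i ** X + G j ** Y = mat 1)"
  shows "\<exists>a b. G x ** a + mprod G xs ** b = mat 1"
  using assms(1,2)
proof (induction xs)
  case Nil
  show ?case by (rule exI[of _ 0], rule exI[of _ "mat 1"]) simp
next
  case (Cons y ys)
  then obtain a2 b2 where ab2: "G x ** a2 + mprod G ys ** b2 = mat 1" by auto
  have xy: "x \<noteq> y" "x \<in> I" "y \<in> I" using Cons.prems by auto
  then obtain X1 Y1 where XY: "G x ** X1 + G y ** Y1 = mat 1" using bz by blast
  have c: "G y ** G x = G x ** G y" using comm xy by auto
  have "mat 1 = G x ** X1 + G y ** ((G x ** a2 + mprod G ys ** b2) ** Y1)"
    using XY ab2 by simp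
  also have "\<dots> = G x ** X1 + (G y ** G x) ** (a2 ** Y1) + (G y ** mprod G ys) ** (b2 ** Y1)"
    by (simp add: mm_add_rdistrib matrix_add_ldistrib matrix_mul_assoc add.assoc)
  also have "\<dots> = G x ** (X1 + G y ** (a2 ** Y1)) + mprod G (y # ys) ** (b2 ** Y1)"
    by (simp add: c matrix_add_ldistrib matrix_mul_assoc)
  finally show ?case by metis
qed

lemma crt_list:
  assumes "distinct xs" "set xs \<subseteq> I"
    and comm: "\<forall>i\<in>I. \<forall>j\<in>I. i \<noteq> j \<longrightarrow> G i ** G j = G j ** G i"
    and bz: "\<forall>i\<in>I. \<forall>j\<in>I. i \<noteq> j \<longrightarrow> (\<exists>X Y. G i ** X + G j ** Y = mat 1)"
    and ns: "\<forall>i\<in>I. det (G i) \<noteq> 0"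
    and v: "\<forall>i\<in>set xs. inlat (G i) v"
  shows "inlat (mprod G xs) v"
  using assms(1,2) v
proof (induction xs)
  case Nil then show ?case unfolding inlat_def by (metis matrix_vector_mul_lid mprod_Nil)
next
  case (Cons x xs)
  then have IH: "inlat (mprod G xs) v" and vx: "inlat (G x) v" by auto
  have cm: "G x ** mprod G xs = mprod G xs ** G x"
  proof (rule comm_mprod, intro ballI)
    fix j assume "j \<in> set xs"
    then have "x \<noteq> j" "j \<in> I" "x \<in> I" using Cons.prems by auto
    then show "G x ** G j = G j ** G x" using comm by blast
  qed
  obtain a b where ab: "G x ** a + mprod G xs ** b = mat 1"
    using bezout_prod[OF _ Cons.prems(2) comm bz] Cons.prems(1) by auto
  have "det (mprod G xs) \<noteq> 0" using Cons.prems ns by (intro mprod_det) auto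
  from inter2[OF cm ab this vx IH] show ?case by simp
qed




lemma real_inv:
  fixes R :: "'n::finite imat"
  assumes "det R \<noteq> 0"
  obtains Ri where "Ri ** real_mat R = mat 1" "real_mat R ** Ri = mat 1"
proof -
  have "invertible (real_mat R)" using assms by (simp add: invertible_det_nz det_real_mat)
  then show ?thesis using that unfolding invertible_def by blast
qed

lemma resid_exists:
  fixes R :: "'n::finite imat"
  assumes "det R \<noteq> 0"
  shows "\<exists>r. r \<in> NN R \<and> (\<exists>z. m - r = R *v z)"
proof -
  obtain Ri where Ri: "Ri ** real_mat R = mat 1" "real_mat R ** Ri = mat 1" using real_inv[OF assms] .
  define x where "x = Ri *v real_vec m"
  define z where "z = (\<chi> i. \<lfloor>x $ i\<rfloor>)"
  define r where "r = m - R *v z"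
  have "real_vec r = real_vec m - real_mat R *v real_vec z"
    by (simp add: r_def real_vec_diff real_vec_mult)
  also have "real_vec m = real_mat R *v x"
    by (simp add: x_def matrix_vector_mul_assoc Ri)
  finally have "real_vec r = real_mat R *v (x - real_vec z)"
    by (simp add: matrix_vector_mult_diff_distrib)
  moreover have "\<forall>i. 0 \<le> (x - real_vec z) $ i \<and> (x - real_vec z) $ i < 1"
    by (simp add: z_def real_vec_def) linarith
  ultimately have "r \<in> NN R" unfolding NN_def by blast
  moreover have "m - r = R *v z" by (simp add: r_def)
  ultimately show ?thesis by blast
qed

lemma resid_unique:
  fixes R :: "'n::finite imat"
  assumes "det R \<noteq> 0" "r1 \<in> NN R" "r2 \<in> NN R" "inlat R (r1 - r2)"
  shows "r1 = r2"
proof -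
  obtain Ri where Ri: "Ri ** real_mat R = mat 1" "real_mat R ** Ri = mat 1" using real_inv[OF assms(1)] .
  obtain x1 where x1: "\<forall>i. 0 \<le> x1 $ i \<and> x1 $ i < 1" "real_vec r1 = real_mat R *v x1"
    using assms(2) unfolding NN_def by blast
  obtain x2 where x2: "\<forall>i. 0 \<le> x2 $ i \<and> x2 $ i < 1" "real_vec r2 = real_mat R *v x2"
    using assms(3) unfolding NN_def by blast
  obtain z where z: "r1 - r2 = R *v z" using assms(4) unfolding inlat_def by blast
  have "real_mat R *v (x1 - x2) = real_mat R *v real_vec z"
    using arg_cong[OF z, of real_vec] x1 x2
    by (simp add: real_vec_diff real_vec_mult matrix_vector_mult_diff_distrib)
  then have "Ri *v (real_mat R *v (x1 - x2)) = Ri *v (real_mat R *v real_vec z)" by simp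
  then have e: "x1 - x2 = real_vec z" by (simp add: matrix_vector_mul_assoc Ri)
  have "z $ i = 0" for i
  proof -
    have "real_of_int (z $ i) = x1 $ i - x2 $ i"
      using arg_cong[OF e, of "\<lambda>v. v $ i"] by (simp add: real_vec_def)
    then have "real_of_int (z $ i) > -1" "real_of_int (z $ i) < 1" using x1(1) x2(1) by (smt)+
    then show ?thesis by linarith
  qed
  then have "z = 0" by (simp add: vec_eq_iff)
  then show ?thesis using z by simp
qed

lemma resid_prop:
  fixes R :: "'n::finite imat"
  assumes "det R \<noteq> 0"
  shows "resid m R \<in> NN R \<and> inlat R (m - resid m R)"
proof -
  have "\<exists>!r. r \<in> NN R \<and> (\<exists>z. m - r = R *v z)"
  proof (rule ex_ex1I)
    show "\<exists>r. r \<in> NN R \<and> (\<exists>z. m - r = R *v z)" by (rule resid_exists[OF assms])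
  next
    fix r1 r2 assume h: "r1 \<in> NN R \<and> (\<exists>z. m - r1 = R *v z)" "r2 \<in> NN R \<and> (\<exists>z. m - r2 = R *v z)"
    then have "inlat R ((m - r2) - (m - r1))" unfolding inlat_def by (metis inlat_def inlat_diff)
    then show "r1 = r2" using resid_unique[OF assms] h by simp
  qed
  from theI'[OF this] show ?thesis unfolding resid_def inlat_def by blast
qed

lemma resid_eq:
  fixes R :: "'n::finite imat"
  assumes "det R \<noteq> 0" "r \<in> NN R" "inlat R (m - r)"
  shows "resid m R = r"
proof -
  have "resid m R \<in> NN R" "inlat R (m - resid m R)" using resid_prop[OF assms(1)] by auto
  moreover have "inlat R ((m - resid m R) - (m - r))" using inlat_diff[OF \<open>inlat R (m - resid m R)\<close> assms(3)] .
  ultimately have "inlat R (r - resid m R)" by simp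
  then show ?thesis using resid_unique[OF assms(1,2) \<open>resid m R \<in> NN R\<close>] by simp
qed




theorem corollary3:
  fixes M :: "'n::finite imat" and G :: "nat \<Rightarrow> 'n imat" and L :: nat
  assumes L: "L \<ge> 1"
    and M: "unimodular M"
    and nonsing: "\<forall>i\<in>{1..L}. nonsingular (G i)"
    and comm: "\<forall>i\<in>{1..L}. \<forall>j\<in>{1..L}. i \<noteq> j \<longrightarrow> G i ** G j = G j ** G i"
    and copr: "\<forall>i\<in>{1..L}. \<forall>j\<in>{1..L}. i \<noteq> j \<longrightarrow> coprime_mat (G i) (G j)"
  shows
   "(\<forall>U. unimodular U \<longrightarrow>
        is_lcrm (M ** mprod G [1..<L+1] ** U) (\<lambda>i. M ** G i) {1..L})
    \<and> (\<forall>i\<in>{1..L}. \<exists>Wh Q. (M ** mprod G (filter (\<lambda>j. j \<noteq> i) [1..<L+1])) ** Wh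
                              + (M ** G i) ** Q = mat 1)
    \<and> (\<forall>Wh Q. (\<forall>i\<in>{1..L}. (M ** mprod G (filter (\<lambda>j. j \<noteq> i) [1..<L+1])) ** Wh i
                              + (M ** G i) ** Q i = mat 1) \<longrightarrow>
        (\<forall>U. unimodular U \<longrightarrow>
          (\<forall>m \<in> NN (M ** mprod G [1..<L+1] ** U).
             m = resid (\<Sum>i\<in>{1..L}. ((M ** mprod G (filter (\<lambda>j. j \<noteq> i) [1..<L+1])) ** Wh i)
                                        *v resid m (M ** G i))
                       (M ** mprod G [1..<L+1] ** U))))"
proof -
  define I where "I = {1..L}"
  define xs where "xs = [1..<L+1]"
  have setxs: "set xs = I" "distinct xs" unfolding xs_def I_def by auto
  define Pi where "Pi = mprod G xs"
  have ns: "\<forall>i\<in>I. det (G i) \<noteq> 0" using nonsing unfolding I_def nonsingular_def by auto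
  have commI: "\<forall>i\<in>I. \<forall>j\<in>I. i \<noteq> j \<longrightarrow> G i ** G j = G j ** G i" using comm unfolding I_def .
  have bz: "\<forall>i\<in>I. \<forall>j\<in>I. i \<noteq> j \<longrightarrow> (\<exists>X Y. G i ** X + G j ** Y = mat 1)"
    using copr ns bezout_from_coprime unfolding I_def nonsingular_def by blast
  have detPi: "det Pi \<noteq> 0" unfolding Pi_def using ns setxs by (intro mprod_det) auto
  have dM: "det M \<noteq> 0" using M unfolding unimodular_def by auto
  obtain Mi where Mi: "M ** Mi = mat 1" "Mi ** M = mat 1" using unimod_inv[OF M] by blast
  have crt: "inlat Pi v" if "\<forall>i\<in>I. inlat (G i) v" for v
    unfolding Pi_def using crt_list[OF setxs(2) _ commI bz ns] setxs that by auto
  have crtM: "inlat (M ** Pi ** U) v" if hU: "unimodular U" "\<forall>i\<in>I. inlat (M ** G i) v" for v U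
  proof -
    obtain Ui where Ui: "U ** Ui = mat 1" using unimod_inv[OF hU(1)] by blast
    have "\<forall>i\<in>I. inlat (G i) (Mi *v v)"
    proof
      fix i assume "i \<in> I"
      then obtain z where "v = (M ** G i) *v z" using hU(2) unfolding inlat_def by blast
      then have "Mi *v v = ((Mi ** M) ** G i) *v z" by (simp add: matrix_vector_mul_assoc matrix_mul_assoc)
      then show "inlat (G i) (Mi *v v)" using Mi(2) unfolding inlat_def by auto
    qed
    then obtain z where z: "Mi *v v = Pi *v z" using crt unfolding inlat_def by blast
    have "v = M *v (Mi *v v)" by (simp add: matrix_vector_mul_assoc Mi(1))
    also have "\<dots> = (M ** Pi ** U) *v (Ui *v z)"
      by (simp add: z matrix_vector_mul_assoc) (metis Ui matrix_mul_assoc matrix_mul_rid)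
    finally show ?thesis unfolding inlat_def by blast
  qed
  have pull: "mprod G ys = G i ** mprod G (filter (\<lambda>j. j \<noteq> i) ys)"
    if "distinct ys" "i \<in> set ys" "set ys \<subseteq> I" for ys i
    using mprod_pull[OF that commI] .
  have part1: "\<forall>U. unimodular U \<longrightarrow> is_lcrm (M ** Pi ** U) (\<lambda>i. M ** G i) I"
  proof (intro allI impI)
    fix U :: "'n imat" assume U: "unimodular U"
    have "nonsingular (M ** Pi ** U)"
      using dM detPi U unfolding nonsingular_def unimodular_def by (auto simp: det_mul)
    moreover have "\<forall>i\<in>I. \<exists>P. M ** Pi ** U = (M ** G i) ** P"
    proof
      fix i assume "i \<in> I"
      then have "Pi = G i ** mprod G (filter (\<lambda>j. j \<noteq> i) xs)"
        unfolding Pi_def using pull setxs by auto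
      then show "\<exists>P. M ** Pi ** U = (M ** G i) ** P" by (metis matrix_mul_assoc)
    qed
    moreover have "\<exists>A. S = M ** Pi ** U ** A"
      if "nonsingular S" "\<forall>i\<in>I. \<exists>P. S = (M ** G i) ** P" for S
    proof (rule cols_to_mat)
      fix k
      have "\<forall>i\<in>I. inlat (M ** G i) (\<chi> r. S $ r $ k)"
        using that(2) mat_cols_in unfolding inlat_def by metis
      then show "\<exists>z. (\<chi> r. S $ r $ k) = M ** Pi ** U *v z"
        using crtM[OF U] unfolding inlat_def by blast
    qed
    ultimately show "is_lcrm (M ** Pi ** U) (\<lambda>i. M ** G i) I" unfolding is_lcrm_def by blast
  qed
  have part2: "\<forall>i\<in>I. \<exists>Wh Q. (M ** mprod G (filter (\<lambda>j. j \<noteq> i) xs)) ** Wh + (M ** G i) ** Q = mat 1"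
  proof
    fix i assume i: "i \<in> I"
    let ?P = "mprod G (filter (\<lambda>j. j \<noteq> i) xs)"
    have "set (i # filter (\<lambda>j. j \<noteq> i) xs) \<subseteq> I" using i setxs by auto
    then obtain a b where ab: "G i ** a + ?P ** b = mat 1"
      using bezout_prod[OF _ _ commI bz] by fastforce
    have "(M ** ?P) ** (b ** Mi) + (M ** G i) ** (a ** Mi) = M ** (G i ** a + ?P ** b) ** Mi"
      by (simp add: matrix_add_ldistrib mm_add_rdistrib matrix_mul_assoc add.commute)
    also have "\<dots> = mat 1" by (simp add: ab Mi)
    finally show "\<exists>Wh Q. (M ** ?P) ** Wh + (M ** G i) ** Q = mat 1" by blast
  qed
  have part3: "\<forall>Wh Q. (\<forall>i\<in>I. (M ** mprod G (filter (\<lambda>j. j \<noteq> i) xs)) ** Wh i + (M ** G i) ** Q i = mat 1) \<longrightarrow>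
        (\<forall>U. unimodular U \<longrightarrow>
          (\<forall>m \<in> NN (M ** Pi ** U).
             m = resid (\<Sum>i\<in>I. ((M ** mprod G (filter (\<lambda>j. j \<noteq> i) xs)) ** Wh i)
                                        *v resid m (M ** G i)) (M ** Pi ** U)))"
  proof (intro allI impI ballI)
    fix Wh Q U m
    assume H: "\<forall>i\<in>I. (M ** mprod G (filter (\<lambda>j. j \<noteq> i) xs)) ** Wh i + (M ** G i) ** Q i = mat 1"
      and U: "unimodular U" and m: "m \<in> NN (M ** Pi ** U)"
    define W where "W i = M ** mprod G (filter (\<lambda>j. j \<noteq> i) xs)" for i
    define r where "r i = resid m (M ** G i)" for i
    define s where "s = (\<Sum>i\<in>I. (W i ** Wh i) *v r i)"
    have dR: "det (M ** Pi ** U) \<noteq> 0"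
      using dM detPi U unfolding unimodular_def by (auto simp: det_mul)
    have dMG: "det (M ** G i) \<noteq> 0" if "i \<in> I" for i using dM ns that by (simp add: det_mul)
    have "\<forall>j\<in>I. inlat (M ** G j) (s - m)"
    proof
      fix j assume j: "j \<in> I"
      have fin: "finite I" unfolding I_def by simp
      have s_split: "s = (W j ** Wh j) *v r j + (\<Sum>i\<in>I - {j}. (W i ** Wh i) *v r i)"
        unfolding s_def using sum.remove[OF fin j] .
      have rj: "inlat (M ** G j) (m - r j)" using resid_prop[OF dMG[OF j]] unfolding r_def by blast
      have e1: "(W j ** Wh j) *v r j = r j - (M ** G j) *v (Q j *v r j)"
      proof -
        have "W j ** Wh j = mat 1 - (M ** G j) ** Q j" using H j unfolding W_def by (simp add: eq_diff_eq)
        then show ?thesis by (simp add: matrix_vector_mult_diff_rdistrib matrix_vector_mul_assoc)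
      qed
      have e2: "(W j ** Wh j) *v r j - m = (r j - m) - (M ** G j) *v (Q j *v r j)"
        unfolding e1 by (simp add: algebra_simps)
      have t1: "inlat (M ** G j) ((W j ** Wh j) *v r j - m)"
        unfolding e2 by (rule inlat_diff[OF inlat_neg[OF rj] inlat_mult'])
      have t2: "inlat (M ** G j) (\<Sum>i\<in>I - {j}. (W i ** Wh i) *v r i)"
      proof (rule inlat_sum)
        show "finite (I - {j})" using fin by simp
      next
        fix i assume i: "i \<in> I - {j}"
        let ?ys = "filter (\<lambda>j. j \<noteq> i) xs"
        have "mprod G ?ys = G j ** mprod G (filter (\<lambda>k. k \<noteq> j) ?ys)"
          using pull[of ?ys j] setxs i j by auto
        then have "W i ** Wh i = (M ** G j) ** (mprod G (filter (\<lambda>k. k \<noteq> j) ?ys) ** Wh i)"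
          unfolding W_def by (simp add: matrix_mul_assoc)
        then show "inlat (M ** G j) ((W i ** Wh i) *v r i)" using inlat_mult by metis
      qed
      have e3: "s - m = ((W j ** Wh j) *v r j - m) + (\<Sum>i\<in>I - {j}. (W i ** Wh i) *v r i)"
        unfolding s_split by (simp add: algebra_simps)
      show "inlat (M ** G j) (s - m)" unfolding e3 by (rule inlat_add[OF t1 t2])
    qed
    then have "inlat (M ** Pi ** U) (s - m)" using crtM[OF U] by blast
    then have "resid s (M ** Pi ** U) = m" using resid_eq[OF dR m] by simp
    then show "m = resid (\<Sum>i\<in>I. ((M ** mprod G (filter (\<lambda>j. j \<noteq> i) xs)) ** Wh i)
                                        *v resid m (M ** G i)) (M ** Pi ** U)"
      unfolding s_def W_def r_def by simp
  qed
  show ?thesis using part1 part2 part3 unfolding I_def xs_def Pi_def by blast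
qed


end
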